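(* Let $(\omega_k)_{k\in\mathbb{N}}$ be a (not necessarily convex) growth family, $(J,|\cdot|)$ a graded index set of finite type and $B$ a finite-dimensional Banach space. Then the (LB)-space $\ell^\infty_{\rightarrow}(J,B)$ is a Silva space, i.e.\ it can be written as a locally convex direct limit of Banach spaces with compact operators as bonding maps. In particular, it is compactly regular: every compact subset of $\ell^\infty_{\rightarrow}(J,B)$ is a compact subset of one of the steps $\ell^\infty_k(J,B)$.
   Context: A graded index set is a set $J$ with a map $|\cdot|\colon J\to\mathbb{N}_0$; it is of finite type if each $\{\tau\in J:|\tau|=n\}$ is finite. Growth family $(\omega_k)_{k\in\mathbb{N}}$, $\omega_k\colon\mathbb{N}_0\to\mathbb{N}$: (W1) $\omega_k(0)=1$, $\omega_k(n)\le\omega_{k+1}(n)$; (W2) $\omega_k(n)\omega_k(m)\le\omega_k(n+m)$; (W3) for each $k_1$ some $k_2\ge k_1$ with $\omega_{k_2}(n)\ge2^n\omega_{k_1}(n)$ for all $n$. $\ell^\infty_k(J,B)$ is the Banach space of $f\colon J\to B$ with $\|f\|_{\ell^\infty_k}=\sup_\tau\|f(\tau)\|/\omega_k(|\tau|)<\infty$; $\ell^\infty_{\rightarrow}(J,B)=\bigcup_k\ell^\infty_k(J,B)$ with the locally convex direct limit topology, the bonding maps being the inclusions. *)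

theory Defs
  imports "HOL-Analysis.Analysis"
begin

definition growth_family :: "(nat \<Rightarrow> nat \<Rightarrow> nat) \<Rightarrow> bool" where
  "growth_family \<omega> \<longleftrightarrow>
     (\<forall>k n. \<omega> k n \<ge> 1) \<and>
     (\<forall>k. \<omega> k 0 = 1) \<and> (\<forall>k n. \<omega> k n \<le> \<omega> (Suc k) n) \<and>
     (\<forall>k n m. \<omega> k n * \<omega> k m \<le> \<omega> k (n + m)) \<and>
     (\<forall>k1. \<exists>k2\<ge>k1. \<forall>n. \<omega> k2 n \<ge> 2 ^ n * \<omega> k1 n)"

definition finite_type_grading :: "('j \<Rightarrow> nat) \<Rightarrow> bool" where
  "finite_type_grading d \<longleftrightarrow> (\<forall>n. finite {\<tau>. d \<tau> = n})"

definition wnorm :: "(nat \<Rightarrow> nat \<Rightarrow> nat) \<Rightarrow> ('j \<Rightarrow> nat) \<Rightarrow> nat \<Rightarrow> ('j \<Rightarrow> 'b::real_normed_vector) \<Rightarrow> real" where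
  "wnorm \<omega> d k f = (SUP \<tau>. norm (f \<tau>) / real (\<omega> k (d \<tau>)))"

definition lk :: "(nat \<Rightarrow> nat \<Rightarrow> nat) \<Rightarrow> ('j \<Rightarrow> nat) \<Rightarrow> nat \<Rightarrow> ('j \<Rightarrow> 'b::real_normed_vector) set" where
  "lk \<omega> d k = {f. bdd_above (range (\<lambda>\<tau>. norm (f \<tau>) / real (\<omega> k (d \<tau>))))}"

definition step_top :: "(nat \<Rightarrow> nat \<Rightarrow> nat) \<Rightarrow> ('j \<Rightarrow> nat) \<Rightarrow> nat \<Rightarrow> ('j \<Rightarrow> 'b::real_normed_vector) topology" where
  "step_top \<omega> d k = topology (\<lambda>U. U \<subseteq> lk \<omega> d k \<and>
     (\<forall>f\<in>U. \<exists>e>0. {g \<in> lk \<omega> d k. wnorm \<omega> d k (\<lambda>\<tau>. g \<tau> - f \<tau>) < e} \<subseteq> U))"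

definition abs_convex :: "('j \<Rightarrow> 'b::real_normed_vector) set \<Rightarrow> bool" where
  "abs_convex V \<longleftrightarrow> (\<forall>f\<in>V. \<forall>g\<in>V. \<forall>a b::real. \<bar>a\<bar> + \<bar>b\<bar> \<le> 1 \<longrightarrow> (\<lambda>\<tau>. a *\<^sub>R f \<tau> + b *\<^sub>R g \<tau>) \<in> V)"

text \<open>Locally convex direct limit topology of the steps l^\<infinity>_k, k \<in> I (bonding maps the
  inclusions), on the union of these steps: a set is open iff it contains, around each of its
  points f, a translate f + V of an absolutely convex set V whose trace on every step is a
  0-neighbourhood of that step.\<close>
definition dl_top :: "(nat \<Rightarrow> nat \<Rightarrow> nat) \<Rightarrow> ('j \<Rightarrow> nat) \<Rightarrow> nat set \<Rightarrow> ('j \<Rightarrow> 'b::real_normed_vector) topology" where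
  "dl_top \<omega> d I = topology (\<lambda>U. U \<subseteq> (\<Union>k\<in>I. lk \<omega> d k) \<and>
     (\<forall>f\<in>U. \<exists>V. abs_convex V \<and> V \<subseteq> (\<Union>k\<in>I. lk \<omega> d k) \<and>
        (\<forall>k\<in>I. \<exists>e>0. {g \<in> lk \<omega> d k. wnorm \<omega> d k g < e} \<subseteq> V) \<and>
        (\<forall>v\<in>V. (\<lambda>\<tau>. f \<tau> + v \<tau>) \<in> U)))"

end

theory Submission
  imports Defs
begin


lemma fd_seq:
  fixes S :: "'b::real_normed_vector set"
  assumes "finite S"
  shows "\<forall>x. (\<forall>n. x n \<in> span S) \<and> bounded (range x) \<longrightarrow>
           (\<exists>l r. l \<in> span S \<and> strict_mono (r::nat\<Rightarrow>nat) \<and> (x \<circ> r) \<longlonglongrightarrow> l)"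
  using assms
proof (induction S rule: finite_induct)
  case empty
  show ?case
  proof (intro allI impI)
    fix x :: "nat \<Rightarrow> 'b" assume "(\<forall>n. x n \<in> span {}) \<and> bounded (range x)"
    then have "x = (\<lambda>n. 0)" by auto
    then have "(x \<circ> id) \<longlonglongrightarrow> 0" by simp
    then show "\<exists>l r. l \<in> span {} \<and> strict_mono r \<and> (x \<circ> r) \<longlonglongrightarrow> l"
      by (intro exI[of _ 0] exI[of _ id]) (auto simp: strict_mono_def)
  qed
next
  case (insert a F)
  have clF: "closed (span F)"
    unfolding closed_sequential_limits
  proof (intro allI impI)
    fix x :: "nat \<Rightarrow> 'b" and l assume H: "(\<forall>n. x n \<in> span F) \<and> x \<longlonglongrightarrow> l"
    then have "bounded (range x)"
      using convergent_imp_bounded by blast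
    with insert.IH H obtain l' r where "l' \<in> span F" "strict_mono r" "(x \<circ> r) \<longlonglongrightarrow> l'" by blast
    moreover have "(x \<circ> r) \<longlonglongrightarrow> l" using H \<open>strict_mono r\<close> LIMSEQ_subseq_LIMSEQ by blast
    ultimately show "l \<in> span F" using LIMSEQ_unique by metis
  qed
  show ?case
  proof (cases "a \<in> span F")
    case True
    then have "span (insert a F) = span F"
      by (simp add: span_redundant)
    then show ?thesis using insert.IH by simp
  next
    case False
    define \<delta> where "\<delta> = infdist a (span F)"
    have \<delta>: "\<delta> > 0" unfolding \<delta>_def
      using infdist_pos_not_in_closed[OF clF _ False] span_zero by blast
    show ?thesis
    proof (intro allI impI)
      fix x :: "nat \<Rightarrow> 'b" assume H: "(\<forall>n. x n \<in> span (insert a F)) \<and> bounded (range x)"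
      then obtain R where R: "\<And>n. norm (x n) \<le> R"
        by (meson bounded_iff rangeI)
      have "\<forall>n. \<exists>c. x n - c *\<^sub>R a \<in> span F" using H span_breakdown_eq by blast
      then obtain c where c: "\<And>n. x n - c n *\<^sub>R a \<in> span F" by metis
      have cb: "\<bar>c n\<bar> \<le> R / \<delta>" for n
      proof (cases "c n = 0")
        case True then show ?thesis using R[of n] \<delta>
          by (metis abs_zero divide_nonneg_pos norm_ge_zero order_trans)
      next
        case False
        have m: "- (inverse (c n)) *\<^sub>R (x n - c n *\<^sub>R a) \<in> span F"
          using c span_scale by blast
        have "\<delta> \<le> dist a (- (inverse (c n)) *\<^sub>R (x n - c n *\<^sub>R a))"
          unfolding \<delta>_def by (rule infdist_le[OF m])
        also have "\<dots> = norm (inverse (c n) *\<^sub>R x n)"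
          using False by (simp add: dist_norm algebra_simps)
        also have "\<dots> = norm (x n) / \<bar>c n\<bar>"
          by (simp add: divide_inverse_commute)
        finally have "\<delta> * \<bar>c n\<bar> \<le> norm (x n)"
          using False by (simp add: field_simps)
        then show ?thesis using R[of n] \<delta> by (simp add: field_simps)
      qed
      have "compact (cball (0::real) (R/\<delta>))" by simp
      then have "seq_compact (cball (0::real) (R/\<delta>))" by (rule compact_imp_seq_compact)
      then obtain l1 and r1 :: "nat \<Rightarrow> nat" where l1: "strict_mono r1" "(c \<circ> r1) \<longlonglongrightarrow> l1"
        using cb unfolding seq_compact_def by (metis mem_cball_0 real_norm_def)
      define s where "s = (\<lambda>n. x (r1 n) - c (r1 n) *\<^sub>R a)"
      have "norm (s n) \<le> R + R / \<delta> * norm a" for n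
      proof -
        have "norm (s n) \<le> norm (x (r1 n)) + \<bar>c (r1 n)\<bar> * norm a"
          unfolding s_def by (metis norm_scaleR norm_triangle_ineq4)
        also have "\<dots> \<le> R + R / \<delta> * norm a"
          by (intro add_mono R mult_right_mono cb) auto
        finally show ?thesis .
      qed
      then have "bounded (range s)" by (auto simp: bounded_iff)
      moreover have "\<forall>n. s n \<in> span F" using c s_def by simp
      ultimately obtain l2 r2 where l2: "l2 \<in> span F" "strict_mono r2" "(s \<circ> r2) \<longlonglongrightarrow> l2"
        using insert.IH by blast
      have cc: "((c \<circ> r1) \<circ> r2) \<longlonglongrightarrow> l1"
        using l1(2) l2(2) LIMSEQ_subseq_LIMSEQ by blast
      have "(\<lambda>n. (s \<circ> r2) n + ((c \<circ> r1) \<circ> r2) n *\<^sub>R a) \<longlonglongrightarrow> l2 + l1 *\<^sub>R a"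
        by (intro tendsto_intros l2(3) cc)
      moreover have "(\<lambda>n. (s \<circ> r2) n + ((c \<circ> r1) \<circ> r2) n *\<^sub>R a) = x \<circ> (r1 \<circ> r2)"
        by (auto simp: s_def)
      moreover have "l2 + l1 *\<^sub>R a \<in> span (insert a F)"
        using l2(1) by (meson span_add span_base span_mono span_scale insertI1 subset_insertI subsetD)
      moreover have "strict_mono (r1 \<circ> r2)" using l1(1) l2(2) strict_mono_o by blast
      ultimately show "\<exists>l r. l \<in> span (insert a F) \<and> strict_mono r \<and> (x \<circ> r) \<longlonglongrightarrow> l"
        by metis
    qed
  qed
qed

lemma fd_compact_cball:
  fixes S :: "'b::real_normed_vector set"
  assumes "finite S" "span S = UNIV"
  shows "compact (cball (0::'b) r)"
  unfolding compact_eq_seq_compact_metric seq_compact_def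
proof (intro allI impI)
  fix x :: "nat \<Rightarrow> 'b" assume H: "\<forall>n. x n \<in> cball (0::'b) r"
  then have "bounded (range x)" by (metis bounded_cball bounded_subset image_subsetI)
  then obtain l q where "strict_mono q" "(x \<circ> q) \<longlonglongrightarrow> l"
    using fd_seq[OF assms(1)] assms(2) by blast
  moreover have "l \<in> cball 0 r"
    using closed_cball calculation(2) H by (metis LIMSEQ_le_const2 mem_cball_0 o_apply tendsto_norm)
  ultimately show "\<exists>l\<in>cball 0 r. \<exists>q. strict_mono q \<and> (x \<circ> q) \<longlonglongrightarrow> l" by blast
qed



lemma gf_pos: "growth_family \<omega> \<Longrightarrow> real (\<omega> k n) \<ge> 1"
  unfolding growth_family_def by auto

lemma gf_pos_nat: "growth_family \<omega> \<Longrightarrow> 0 < \<omega> k n"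
  unfolding growth_family_def by (metis not_one_le_zero not_gr0)

lemma gf_mono: assumes "growth_family \<omega>" "k \<le> k'" shows "\<omega> k n \<le> \<omega> k' n"
  using lift_Suc_mono_le[of "\<lambda>k. \<omega> k n", OF _ assms(2)] assms(1)
  unfolding growth_family_def by blast

lemma norm_le_wnorm:
  assumes "growth_family \<omega>" "f \<in> lk \<omega> d k"
  shows "norm (f \<tau>) \<le> wnorm \<omega> d k f * \<omega> k (d \<tau>)"
proof -
  have "norm (f \<tau>) / real (\<omega> k (d \<tau>)) \<le> wnorm \<omega> d k f"
    unfolding wnorm_def using assms(2) unfolding lk_def by (auto intro: cSUP_upper)
  moreover have "real (\<omega> k (d \<tau>)) > 0" using gf_pos[OF assms(1)] by (smt (verit))
  ultimately show ?thesis by (simp add: field_simps)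
qed

lemma wnorm_le:
  fixes C :: real
  assumes "growth_family \<omega>" "\<And>\<tau>. norm (f \<tau>) \<le> C * real (\<omega> k (d \<tau>))"
  shows "f \<in> lk \<omega> d k" "wnorm \<omega> d k f \<le> C"
proof -
  have b: "norm (f \<tau>) / real (\<omega> k (d \<tau>)) \<le> C" for \<tau>
  proof -
    have "real (\<omega> k (d \<tau>)) > 0" using gf_pos[OF assms(1)] by (smt (verit))
    then show ?thesis using assms(2)[of \<tau>] by (simp add: field_simps)
  qed
  then show "f \<in> lk \<omega> d k" unfolding lk_def bdd_above_def by auto
  show "wnorm \<omega> d k f \<le> C" unfolding wnorm_def using b by (intro cSUP_least) auto
qed

lemma wnorm_nonneg:
  assumes "growth_family \<omega>" "f \<in> lk \<omega> d k" shows "wnorm \<omega> d k f \<ge> 0"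
proof -
  have "norm (f undefined) \<le> wnorm \<omega> d k f * \<omega> k (d undefined)" by (rule norm_le_wnorm[OF assms])
  moreover have "real (\<omega> k (d undefined)) > 0" using gf_pos[OF assms(1)] by (smt (verit))
  ultimately show ?thesis by (smt (verit) norm_ge_zero zero_le_mult_iff)
qed

lemma lk_comb:
  assumes "growth_family \<omega>" "f \<in> lk \<omega> d k" "g \<in> lk \<omega> d k"
  shows "(\<lambda>\<tau>. a *\<^sub>R f \<tau> + b *\<^sub>R g \<tau>) \<in> lk \<omega> d k"
    "wnorm \<omega> d k (\<lambda>\<tau>. a *\<^sub>R f \<tau> + b *\<^sub>R g \<tau>) \<le> \<bar>a\<bar> * wnorm \<omega> d k f + \<bar>b\<bar> * wnorm \<omega> d k g"
proof -
  have "norm (a *\<^sub>R f \<tau> + b *\<^sub>R g \<tau>) \<le> (\<bar>a\<bar> * wnorm \<omega> d k f + \<bar>b\<bar> * wnorm \<omega> d k g) * \<omega> k (d \<tau>)" for \<tau>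
  proof -
    have "norm (a *\<^sub>R f \<tau> + b *\<^sub>R g \<tau>) \<le> \<bar>a\<bar> * norm (f \<tau>) + \<bar>b\<bar> * norm (g \<tau>)"
      by (metis norm_scaleR norm_triangle_ineq)
    also have "\<dots> \<le> \<bar>a\<bar> * (wnorm \<omega> d k f * \<omega> k (d \<tau>)) + \<bar>b\<bar> * (wnorm \<omega> d k g * \<omega> k (d \<tau>))"
      by (intro add_mono mult_left_mono norm_le_wnorm assms) auto
    finally show ?thesis by (simp add: algebra_simps)
  qed
  note X = this
  show "(\<lambda>\<tau>. a *\<^sub>R f \<tau> + b *\<^sub>R g \<tau>) \<in> lk \<omega> d k"
    by (rule wnorm_le(1)[OF assms(1) X])
  show "wnorm \<omega> d k (\<lambda>\<tau>. a *\<^sub>R f \<tau> + b *\<^sub>R g \<tau>) \<le> \<bar>a\<bar> * wnorm \<omega> d k f + \<bar>b\<bar> * wnorm \<omega> d k g"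
    by (rule wnorm_le(2)[OF assms(1) X])
qed

lemma lk_diff:
  assumes "growth_family \<omega>" "f \<in> lk \<omega> d k" "g \<in> lk \<omega> d k"
  shows "(\<lambda>\<tau>. f \<tau> - g \<tau>) \<in> lk \<omega> d k"
  using lk_comb(1)[OF assms, of 1 "-1"] by simp

lemma lk_add:
  assumes "growth_family \<omega>" "f \<in> lk \<omega> d k" "g \<in> lk \<omega> d k"
  shows "(\<lambda>\<tau>. f \<tau> + g \<tau>) \<in> lk \<omega> d k"
  using lk_comb(1)[OF assms, of 1 1] by simp

lemma lk_mono:
  assumes "growth_family \<omega>" "k \<le> k'" "f \<in> lk \<omega> d k"
  shows "f \<in> lk \<omega> d k'" "wnorm \<omega> d k' f \<le> wnorm \<omega> d k f"
proof -
  have "norm (f \<tau>) \<le> wnorm \<omega> d k f * \<omega> k' (d \<tau>)" for \<tau>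
  proof -
    have "norm (f \<tau>) \<le> wnorm \<omega> d k f * \<omega> k (d \<tau>)" by (rule norm_le_wnorm[OF assms(1,3)])
    also have "\<dots> \<le> wnorm \<omega> d k f * \<omega> k' (d \<tau>)"
      using gf_mono[OF assms(1,2)] wnorm_nonneg[OF assms(1,3)] by (intro mult_left_mono) auto
    finally show ?thesis .
  qed
  then show "f \<in> lk \<omega> d k'" "wnorm \<omega> d k' f \<le> wnorm \<omega> d k f"
    using wnorm_le[OF assms(1)] by blast+
qed

definition stepP :: "(nat \<Rightarrow> nat \<Rightarrow> nat) \<Rightarrow> ('j \<Rightarrow> nat) \<Rightarrow> nat \<Rightarrow> ('j \<Rightarrow> 'b::real_normed_vector) set \<Rightarrow> bool" where
  "stepP \<omega> d k U \<longleftrightarrow> U \<subseteq> lk \<omega> d k \<and>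
     (\<forall>f\<in>U. \<exists>e>0. {g \<in> lk \<omega> d k. wnorm \<omega> d k (\<lambda>\<tau>. g \<tau> - f \<tau>) < e} \<subseteq> U)"

lemma step_top_eq: "step_top \<omega> d k = topology (stepP \<omega> d k)"
  unfolding step_top_def stepP_def by simp

lemma istop_step:
  fixes d :: "'j \<Rightarrow> nat"
  shows "istopology (stepP \<omega> d k :: ('j \<Rightarrow> 'b::real_normed_vector) set \<Rightarrow> bool)"
  unfolding istopology_def
proof (intro conjI allI impI)
  fix S T :: "('j \<Rightarrow> 'b) set" assume S: "stepP \<omega> d k S" and T: "stepP \<omega> d k T"
  show "stepP \<omega> d k (S \<inter> T)" unfolding stepP_def
  proof (intro conjI ballI)
    show "S \<inter> T \<subseteq> lk \<omega> d k" using S unfolding stepP_def by auto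
    fix f assume "f \<in> S \<inter> T"
    then obtain e1 e2 where "e1 > 0" "e2 > 0"
      "{g \<in> lk \<omega> d k. wnorm \<omega> d k (\<lambda>\<tau>. g \<tau> - f \<tau>) < e1} \<subseteq> S"
      "{g \<in> lk \<omega> d k. wnorm \<omega> d k (\<lambda>\<tau>. g \<tau> - f \<tau>) < e2} \<subseteq> T" using S T unfolding stepP_def by blast
    then show "\<exists>e>0. {g \<in> lk \<omega> d k. wnorm \<omega> d k (\<lambda>\<tau>. g \<tau> - f \<tau>) < e} \<subseteq> S \<inter> T"
      by (intro exI[of _ "min e1 e2"]) auto
  qed
next
  fix K :: "('j \<Rightarrow> 'b) set set" assume "\<forall>S\<in>K. stepP \<omega> d k S"
  then show "stepP \<omega> d k (\<Union>K)" unfolding stepP_def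
    by (meson Sup_upper Union_iff Union_least dual_order.trans)
qed

lemma openin_step:
  shows "openin (step_top \<omega> d k) U \<longleftrightarrow> U \<subseteq> lk \<omega> d k \<and>
     (\<forall>f\<in>U. \<exists>e>0. {g \<in> lk \<omega> d k. wnorm \<omega> d k (\<lambda>\<tau>. g \<tau> - f \<tau>) < e} \<subseteq> U)"
  by (simp add: step_top_eq topology_inverse'[OF istop_step] stepP_def)

lemma topspace_step:
  assumes "growth_family \<omega>"
  shows "topspace (step_top \<omega> d k) = lk \<omega> d k"
proof -
  have "openin (step_top \<omega> d k) (lk \<omega> d k)"
    unfolding openin_step by (auto intro!: exI[of _ 1])
  then show ?thesis using openin_subset[of "step_top \<omega> d k"] openin_step
    by (meson openin_topspace subset_antisym)
qed



lemma L_mem: "f \<in> (\<Union>k. lk \<omega> d k) \<longleftrightarrow> (\<exists>k. f \<in> lk \<omega> d k)" by auto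

lemma L_comb:
  assumes "growth_family \<omega>" "f \<in> (\<Union>k. lk \<omega> d k)" "g \<in> (\<Union>k. lk \<omega> d k)"
  shows "(\<lambda>\<tau>. a *\<^sub>R f \<tau> + b *\<^sub>R g \<tau>) \<in> (\<Union>k. lk \<omega> d k)"
proof -
  obtain k1 k2 where f1: "f \<in> lk \<omega> d k1" and g2: "g \<in> lk \<omega> d k2" using assms by auto
  have f': "f \<in> lk \<omega> d (max k1 k2)" by (rule lk_mono(1)[OF assms(1) max.cobounded1 f1])
  have g': "g \<in> lk \<omega> d (max k1 k2)" by (rule lk_mono(1)[OF assms(1) max.cobounded2 g2])
  have "(\<lambda>\<tau>. a *\<^sub>R f \<tau> + b *\<^sub>R g \<tau>) \<in> lk \<omega> d (max k1 k2)" by (rule lk_comb(1)[OF assms(1) f' g'])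
  then show ?thesis by blast
qed

lemma L_add:
  assumes "growth_family \<omega>" "f \<in> (\<Union>k. lk \<omega> d k)" "g \<in> (\<Union>k. lk \<omega> d k)"
  shows "(\<lambda>\<tau>. f \<tau> + g \<tau>) \<in> (\<Union>k. lk \<omega> d k)"
  using L_comb[OF assms, of 1 1] by simp

lemma L_diff:
  assumes "growth_family \<omega>" "f \<in> (\<Union>k. lk \<omega> d k)" "g \<in> (\<Union>k. lk \<omega> d k)"
  shows "(\<lambda>\<tau>. f \<tau> - g \<tau>) \<in> (\<Union>k. lk \<omega> d k)"
  using L_comb[OF assms, of 1 "-1"] by simp

definition dlP where
  "dlP \<omega> d U \<longleftrightarrow> U \<subseteq> (\<Union>k. lk \<omega> d k) \<and>
     (\<forall>f\<in>U. \<exists>V. abs_convex V \<and> V \<subseteq> (\<Union>k. lk \<omega> d k) \<and>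
        (\<forall>k. \<exists>e>0. {g \<in> lk \<omega> d k. wnorm \<omega> d k g < e} \<subseteq> V) \<and>
        (\<forall>v\<in>V. (\<lambda>\<tau>. f \<tau> + v \<tau>) \<in> U))"

lemma dl_top_eq: "dl_top \<omega> d UNIV = topology (dlP \<omega> d)"
  unfolding dl_top_def dlP_def by simp

lemma dlP_E:
  assumes "dlP \<omega> d U" "f \<in> U"
  obtains V where "abs_convex V" "V \<subseteq> (\<Union>k. lk \<omega> d k)"
    "\<forall>k. \<exists>e>0. {g \<in> lk \<omega> d k. wnorm \<omega> d k g < e} \<subseteq> V" "\<forall>v\<in>V. (\<lambda>\<tau>. f \<tau> + v \<tau>) \<in> U"
proof -
  have "\<exists>V. abs_convex V \<and> V \<subseteq> (\<Union>k. lk \<omega> d k) \<and>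
        (\<forall>k. \<exists>e>0. {g \<in> lk \<omega> d k. wnorm \<omega> d k g < e} \<subseteq> V) \<and> (\<forall>v\<in>V. (\<lambda>\<tau>. f \<tau> + v \<tau>) \<in> U)"
    using assms unfolding dlP_def by simp
  then obtain V where V: "abs_convex V" "V \<subseteq> (\<Union>k. lk \<omega> d k)"
    "\<forall>k. \<exists>e>0. {g \<in> lk \<omega> d k. wnorm \<omega> d k g < e} \<subseteq> V" "\<forall>v\<in>V. (\<lambda>\<tau>. f \<tau> + v \<tau>) \<in> U"
    by (elim exE conjE)
  then show ?thesis by (rule that)
qed

lemma dlP_I:
  assumes "U \<subseteq> (\<Union>k. lk \<omega> d k)"
    "\<And>f. f \<in> U \<Longrightarrow> \<exists>V. abs_convex V \<and> V \<subseteq> (\<Union>k. lk \<omega> d k) \<and>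
        (\<forall>k. \<exists>e>0. {g \<in> lk \<omega> d k. wnorm \<omega> d k g < e} \<subseteq> V) \<and> (\<forall>v\<in>V. (\<lambda>\<tau>. f \<tau> + v \<tau>) \<in> U)"
  shows "dlP \<omega> d U"
  unfolding dlP_def using assms by simp

lemma abs_convex_Int: "abs_convex A \<Longrightarrow> abs_convex B \<Longrightarrow> abs_convex (A \<inter> B)"
  unfolding abs_convex_def by simp

lemma istop_dl:
  fixes d :: "'j \<Rightarrow> nat"
  shows "istopology (dlP \<omega> d :: ('j \<Rightarrow> 'b::real_normed_vector) set \<Rightarrow> bool)"
  unfolding istopology_def
proof (intro conjI allI impI)
  fix S T :: "('j \<Rightarrow> 'b) set" assume S: "dlP \<omega> d S" and T: "dlP \<omega> d T"
  show "dlP \<omega> d (S \<inter> T)"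
  proof (rule dlP_I)
    show "S \<inter> T \<subseteq> (\<Union>k. lk \<omega> d k)" using S unfolding dlP_def by auto
    fix f assume fST: "f \<in> S \<inter> T"
    obtain V1 where V1: "abs_convex V1" "V1 \<subseteq> (\<Union>k. lk \<omega> d k)"
        "\<forall>k. \<exists>e>0. {g \<in> lk \<omega> d k. wnorm \<omega> d k g < e} \<subseteq> V1" "\<forall>v\<in>V1. (\<lambda>\<tau>. f \<tau> + v \<tau>) \<in> S"
      using dlP_E[OF S, of f] fST by blast
    obtain V2 where V2: "abs_convex V2" "V2 \<subseteq> (\<Union>k. lk \<omega> d k)"
        "\<forall>k. \<exists>e>0. {g \<in> lk \<omega> d k. wnorm \<omega> d k g < e} \<subseteq> V2" "\<forall>v\<in>V2. (\<lambda>\<tau>. f \<tau> + v \<tau>) \<in> T"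
      using dlP_E[OF T, of f] fST by blast
    have tr: "\<exists>e>0. {g \<in> lk \<omega> d k. wnorm \<omega> d k g < e} \<subseteq> V1 \<inter> V2" for k
    proof -
      obtain e1 where "e1 > 0" "{g \<in> lk \<omega> d k. wnorm \<omega> d k g < e1} \<subseteq> V1" using V1(3) by blast
      moreover obtain e2 where "e2 > 0" "{g \<in> lk \<omega> d k. wnorm \<omega> d k g < e2} \<subseteq> V2" using V2(3) by blast
      ultimately show ?thesis by (intro exI[of _ "min e1 e2"]) auto
    qed
    show "\<exists>V. abs_convex V \<and> V \<subseteq> (\<Union>k. lk \<omega> d k) \<and>
        (\<forall>k. \<exists>e>0. {g \<in> lk \<omega> d k. wnorm \<omega> d k g < e} \<subseteq> V) \<and> (\<forall>v\<in>V. (\<lambda>\<tau>. f \<tau> + v \<tau>) \<in> S \<inter> T)"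
      using abs_convex_Int[OF V1(1) V2(1)] V1(2,4) V2(4) tr by blast
  qed
next
  fix K :: "('j \<Rightarrow> 'b) set set" assume H: "\<forall>S\<in>K. dlP \<omega> d S"
  show "dlP \<omega> d (\<Union>K)"
  proof (rule dlP_I)
    show "\<Union>K \<subseteq> (\<Union>k. lk \<omega> d k)" using H unfolding dlP_def by blast
    fix f assume "f \<in> \<Union>K"
    then obtain S where S: "S \<in> K" "f \<in> S" by blast
    obtain V where V: "abs_convex V" "V \<subseteq> (\<Union>k. lk \<omega> d k)"
        "\<forall>k. \<exists>e>0. {g \<in> lk \<omega> d k. wnorm \<omega> d k g < e} \<subseteq> V" "\<forall>v\<in>V. (\<lambda>\<tau>. f \<tau> + v \<tau>) \<in> S"
      using dlP_E[of \<omega> d S f] H S by blast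
    show "\<exists>V. abs_convex V \<and> V \<subseteq> (\<Union>k. lk \<omega> d k) \<and>
        (\<forall>k. \<exists>e>0. {g \<in> lk \<omega> d k. wnorm \<omega> d k g < e} \<subseteq> V) \<and> (\<forall>v\<in>V. (\<lambda>\<tau>. f \<tau> + v \<tau>) \<in> \<Union>K)"
      using V S by blast
  qed
qed

lemma openin_dl: "openin (dl_top \<omega> d UNIV) U \<longleftrightarrow> dlP \<omega> d U"
  by (simp add: dl_top_eq topology_inverse'[OF istop_dl])

lemma abs_convex_L:
  fixes d :: "'j \<Rightarrow> nat"
  assumes "growth_family \<omega>" shows "abs_convex (\<Union>k. lk \<omega> d k :: ('j \<Rightarrow> 'b::real_normed_vector) set)"
  unfolding abs_convex_def
proof (intro ballI allI impI)
  fix f g :: "'j \<Rightarrow> 'b" and a b :: real assume "f \<in> (\<Union>k. lk \<omega> d k)" "g \<in> (\<Union>k. lk \<omega> d k)"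
  then show "(\<lambda>\<tau>. a *\<^sub>R f \<tau> + b *\<^sub>R g \<tau>) \<in> (\<Union>k. lk \<omega> d k)" by (rule L_comb[OF assms])
qed

lemma topspace_dl:
  fixes d :: "'j \<Rightarrow> nat"
  assumes "growth_family \<omega>"
  shows "topspace (dl_top \<omega> d UNIV :: ('j \<Rightarrow> 'b::real_normed_vector) topology) = (\<Union>k. lk \<omega> d k)"
proof -
  have "dlP \<omega> d (\<Union>k. lk \<omega> d k :: ('j \<Rightarrow> 'b) set)"
  proof (rule dlP_I)
    fix f :: "'j \<Rightarrow> 'b" assume f: "f \<in> (\<Union>k. lk \<omega> d k)"
    have tr: "\<exists>e>0. {g \<in> lk \<omega> d k. wnorm \<omega> d k g < e} \<subseteq> (\<Union>k. lk \<omega> d k :: ('j \<Rightarrow> 'b) set)" for k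
      by (intro exI[of _ 1]) auto
    have ad: "\<forall>v\<in>(\<Union>k. lk \<omega> d k). (\<lambda>\<tau>. f \<tau> + v \<tau>) \<in> (\<Union>k. lk \<omega> d k)"
    proof
      fix v :: "'j \<Rightarrow> 'b" assume "v \<in> (\<Union>k. lk \<omega> d k)"
      then show "(\<lambda>\<tau>. f \<tau> + v \<tau>) \<in> (\<Union>k. lk \<omega> d k)" by (rule L_add[OF assms f])
    qed
    show "\<exists>V. abs_convex V \<and> V \<subseteq> (\<Union>k. lk \<omega> d k) \<and>
        (\<forall>k. \<exists>e>0. {g \<in> lk \<omega> d k. wnorm \<omega> d k g < e} \<subseteq> V) \<and> (\<forall>v\<in>V. (\<lambda>\<tau>. f \<tau> + v \<tau>) \<in> (\<Union>k. lk \<omega> d k))"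
      using abs_convex_L[OF assms] tr ad by blast
  qed simp
  then have o: "openin (dl_top \<omega> d UNIV :: ('j \<Rightarrow> 'b) topology) (\<Union>k. lk \<omega> d k)" by (simp add: openin_dl)
  have "topspace (dl_top \<omega> d UNIV :: ('j \<Rightarrow> 'b) topology) \<subseteq> (\<Union>k. lk \<omega> d k)"
    using openin_topspace[of "dl_top \<omega> d UNIV :: ('j \<Rightarrow> 'b) topology"] unfolding openin_dl dlP_def by blast
  moreover have "(\<Union>k. lk \<omega> d k) \<subseteq> topspace (dl_top \<omega> d UNIV :: ('j \<Rightarrow> 'b) topology)" using openin_subset[OF o] .
  ultimately show ?thesis by (rule subset_antisym)
qed

lemma dl_open_ball:
  fixes p :: "('j \<Rightarrow> 'b::real_normed_vector) \<Rightarrow> real" and d :: "'j \<Rightarrow> nat" and f0 :: "'j \<Rightarrow> 'b"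
  assumes gf: "growth_family \<omega>"
    and comb: "\<And>(f::'j \<Rightarrow> 'b) (g::'j \<Rightarrow> 'b) a b. f \<in> (\<Union>k. lk \<omega> d k) \<Longrightarrow> g \<in> (\<Union>k. lk \<omega> d k) \<Longrightarrow>
          p (\<lambda>\<tau>. a *\<^sub>R f \<tau> + b *\<^sub>R g \<tau>) \<le> \<bar>a\<bar> * p f + \<bar>b\<bar> * p g"
    and bnd: "\<And>k. \<exists>C>0. \<forall>g\<in>(lk \<omega> d k :: ('j \<Rightarrow> 'b) set). p g \<le> C * wnorm \<omega> d k g"
    and f0: "f0 \<in> (\<Union>k. lk \<omega> d k)"
  shows "openin (dl_top \<omega> d UNIV) {h \<in> (\<Union>k. lk \<omega> d k). p (\<lambda>\<tau>. h \<tau> - f0 \<tau>) < r}"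
  unfolding openin_dl dlP_def
proof (intro conjI ballI)
  fix h assume h: "h \<in> {h \<in> (\<Union>k. lk \<omega> d k). p (\<lambda>\<tau>. h \<tau> - f0 \<tau>) < r}"
  define s where "s = r - p (\<lambda>\<tau>. h \<tau> - f0 \<tau>)"
  have s: "s > 0" using h s_def by auto
  define V where "V = {v \<in> (\<Union>k. lk \<omega> d k). p v < s}"
  show "\<exists>V. abs_convex V \<and> V \<subseteq> (\<Union>k. lk \<omega> d k) \<and>
        (\<forall>k. \<exists>e>0. {g \<in> lk \<omega> d k. wnorm \<omega> d k g < e} \<subseteq> V) \<and>
        (\<forall>v\<in>V. (\<lambda>\<tau>. h \<tau> + v \<tau>) \<in> {h \<in> (\<Union>k. lk \<omega> d k). p (\<lambda>\<tau>. h \<tau> - f0 \<tau>) < r})"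
  proof (intro exI[of _ V] conjI allI ballI)
    show "abs_convex V" unfolding abs_convex_def
    proof (intro ballI allI impI)
      fix f g a b assume fg: "f \<in> V" "g \<in> V" and ab: "\<bar>a\<bar> + \<bar>b::real\<bar> \<le> 1"
      have "p (\<lambda>\<tau>. a *\<^sub>R f \<tau> + b *\<^sub>R g \<tau>) \<le> \<bar>a\<bar> * p f + \<bar>b\<bar> * p g"
        using fg comb V_def by blast
      also have "\<dots> < s"
      proof -
        define M0 where "M0 = max (max (p f) (p g)) 0"
        have M0: "M0 < s" "M0 \<ge> 0" "p f \<le> M0" "p g \<le> M0" using fg V_def s unfolding M0_def by auto
        have "\<bar>a\<bar> * p f \<le> \<bar>a\<bar> * M0" "\<bar>b\<bar> * p g \<le> \<bar>b\<bar> * M0"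
          using M0 by (auto intro!: mult_left_mono)
        moreover have "(\<bar>a\<bar> + \<bar>b\<bar>) * M0 \<le> 1 * M0" using ab M0 by (intro mult_right_mono) auto
        ultimately show ?thesis using M0 by (simp add: algebra_simps)
      qed
      finally have pl: "p (\<lambda>\<tau>. a *\<^sub>R f \<tau> + b *\<^sub>R g \<tau>) < s" .
      have "f \<in> (\<Union>k. lk \<omega> d k)" "g \<in> (\<Union>k. lk \<omega> d k)" using fg V_def by auto
      then have "(\<lambda>\<tau>. a *\<^sub>R f \<tau> + b *\<^sub>R g \<tau>) \<in> (\<Union>k. lk \<omega> d k)" by (rule L_comb[OF gf])
      with pl show "(\<lambda>\<tau>. a *\<^sub>R f \<tau> + b *\<^sub>R g \<tau>) \<in> V"
        unfolding V_def by blast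
    qed
    show "V \<subseteq> (\<Union>k. lk \<omega> d k)" using V_def by auto
  next
    fix k
    obtain C where C: "C > 0" "\<forall>g\<in>(lk \<omega> d k :: ('j \<Rightarrow> 'b) set). p g \<le> C * wnorm \<omega> d k g" using bnd by blast
    show "\<exists>e>0. {g \<in> lk \<omega> d k. wnorm \<omega> d k g < e} \<subseteq> V"
    proof (intro exI[of _ "s / C"] conjI subsetI)
      show "s / C > 0" using s C by auto
      fix g :: "'j \<Rightarrow> 'b" assume "g \<in> {g \<in> lk \<omega> d k. wnorm \<omega> d k g < s / C}"
      then have "g \<in> lk \<omega> d k" "wnorm \<omega> d k g < s / C" by auto
      then have "p g < s" using C by (smt (verit, best) pos_less_divide_eq mult.commute)
      then show "g \<in> V" using V_def \<open>g \<in> lk \<omega> d k\<close> by auto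
    qed
  next
    fix v assume v: "v \<in> V"
    have hL: "h \<in> (\<Union>k. lk \<omega> d k)" using h by auto
    have hf: "(\<lambda>\<tau>. h \<tau> - f0 \<tau>) \<in> (\<Union>k. lk \<omega> d k)" using L_diff[OF gf hL f0] .
    have vL: "v \<in> (\<Union>k. lk \<omega> d k)" using v V_def by auto
    have "p (\<lambda>\<tau>. h \<tau> + v \<tau> - f0 \<tau>) = p (\<lambda>\<tau>. 1 *\<^sub>R (h \<tau> - f0 \<tau>) + 1 *\<^sub>R v \<tau>)"
      by (simp add: algebra_simps)
    also have "\<dots> \<le> p (\<lambda>\<tau>. h \<tau> - f0 \<tau>) + p v" using comb[OF hf vL, of 1 1] by simp
    also have "\<dots> < r" using v V_def s_def by auto
    finally show "(\<lambda>\<tau>. h \<tau> + v \<tau>) \<in> {h \<in> (\<Union>k. lk \<omega> d k). p (\<lambda>\<tau>. h \<tau> - f0 \<tau>) < r}"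
      using L_add[OF gf hL vL] by simp
  qed
qed blast

lemma hausdorff_dl:
  assumes gf: "growth_family \<omega>"
  shows "Hausdorff_space (dl_top \<omega> d UNIV :: ('j \<Rightarrow> 'b::real_normed_vector) topology)"
  unfolding Hausdorff_space_def
proof (intro allI impI)
  fix x y :: "'j \<Rightarrow> 'b"
  assume H: "x \<in> topspace (dl_top \<omega> d UNIV) \<and> y \<in> topspace (dl_top \<omega> d UNIV) \<and> x \<noteq> y"
  then have xL: "x \<in> (\<Union>k. lk \<omega> d k)" and yL: "y \<in> (\<Union>k. lk \<omega> d k)"
    using topspace_dl[OF gf] by auto
  obtain t where t: "x t \<noteq> y t" using H by auto
  define r where "r = dist (x t) (y t) / 2"
  have r: "r > 0" using t unfolding r_def by simp
  define p where "p = (\<lambda>g::'j \<Rightarrow> 'b. norm (g t))"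
  have comb: "p (\<lambda>\<tau>. a *\<^sub>R f \<tau> + b *\<^sub>R g \<tau>) \<le> \<bar>a\<bar> * p f + \<bar>b\<bar> * p g" for f g a b
    unfolding p_def using norm_triangle_ineq[of "a *\<^sub>R f t" "b *\<^sub>R g t"] by simp
  have bnd: "\<exists>C>0. \<forall>g\<in>(lk \<omega> d k :: ('j \<Rightarrow> 'b) set). p g \<le> C * wnorm \<omega> d k g" for k
    using norm_le_wnorm[OF gf] gf_pos_nat[OF gf] unfolding p_def
    by (intro exI[of _ "real (\<omega> k (d t))"]) (auto simp: mult.commute)
  have o1: "openin (dl_top \<omega> d UNIV) {h \<in> (\<Union>k. lk \<omega> d k). p (\<lambda>\<tau>. h \<tau> - x \<tau>) < r}"
    by (rule dl_open_ball[OF gf comb bnd xL])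
  have o2: "openin (dl_top \<omega> d UNIV) {h \<in> (\<Union>k. lk \<omega> d k). p (\<lambda>\<tau>. h \<tau> - y \<tau>) < r}"
    by (rule dl_open_ball[OF gf comb bnd yL])
  have dj: "disjnt {h \<in> (\<Union>k. lk \<omega> d k). p (\<lambda>\<tau>. h \<tau> - x \<tau>) < r} {h \<in> (\<Union>k. lk \<omega> d k). p (\<lambda>\<tau>. h \<tau> - y \<tau>) < r}"
    unfolding disjnt_def p_def r_def
  proof (safe)
    fix h assume "norm (h t - x t) < dist (x t) (y t) / 2" "norm (h t - y t) < dist (x t) (y t) / 2"
    moreover have "dist (x t) (y t) \<le> norm (h t - x t) + norm (h t - y t)"
      using dist_triangle[of "x t" "y t" "h t"] by (simp add: dist_norm norm_minus_commute)
    ultimately show "h \<in> {}" by linarith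
  qed
  show "\<exists>U V. openin (dl_top \<omega> d UNIV) U \<and> openin (dl_top \<omega> d UNIV) V \<and> x \<in> U \<and> y \<in> V \<and> disjnt U V"
    using o1 o2 dj xL yL r unfolding p_def by (intro exI conjI) (auto simp del: UN_iff)
qed



lemma finite_deg_lt:
  assumes "finite_type_grading d" shows "finite {\<tau>. d \<tau> < N}"
proof -
  have "{\<tau>. d \<tau> < N} = (\<Union>n<N. {\<tau>. d \<tau> = n})" by auto
  then show ?thesis using assms unfolding finite_type_grading_def by auto
qed

lemma ball_compact:
  fixes \<omega> and d :: "'j \<Rightarrow> nat" and M :: real and S :: "'b::real_normed_vector set"
  assumes gf: "growth_family \<omega>" and ft: "finite_type_grading d"
    and fS: "finite S" "span S = UNIV"
    and dec: "\<And>n. 2 ^ n * \<omega> k n \<le> \<omega> k' n" and M: "M \<ge> 0"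
  shows "compactin (step_top \<omega> d k') {f::'j \<Rightarrow> 'b. \<forall>\<tau>. norm (f \<tau>) \<le> M * \<omega> k (d \<tau>)}"
proof -
  define W where "W = {f::'j \<Rightarrow> 'b. \<forall>\<tau>. norm (f \<tau>) \<le> M * \<omega> k (d \<tau>)}"
  define P where "P = product_topology (\<lambda>_::'j. (euclidean :: 'b topology)) UNIV"
  have W_eq: "W = PiE UNIV (\<lambda>\<tau>. cball 0 (M * \<omega> k (d \<tau>)))"
    unfolding W_def by (auto simp: PiE_def Pi_def)
  have cW: "compactin P W"
    unfolding P_def W_eq compactin_PiE using fd_compact_cball[OF fS] by simp
  have topP: "topspace P = UNIV" unfolding P_def by simp
  have mono': "real (\<omega> k n) \<le> real (\<omega> k' n)" for n
  proof -
    have "1 * \<omega> k n \<le> 2 ^ n * \<omega> k n" by (intro mult_le_mono1) simp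
    then have "\<omega> k n \<le> \<omega> k' n" using dec[of n] by linarith
    then show ?thesis by simp
  qed
  have Wlk: "W \<subseteq> lk \<omega> d k'"
  proof
    fix f assume "f \<in> W"
    have "norm (f \<tau>) \<le> M * \<omega> k' (d \<tau>)" for \<tau>
    proof -
      have "norm (f \<tau>) \<le> M * \<omega> k (d \<tau>)" using \<open>f \<in> W\<close> unfolding W_def by auto
      also have "\<dots> \<le> M * \<omega> k' (d \<tau>)" by (intro mult_left_mono mono' M)
      finally show ?thesis .
    qed
    then show "f \<in> lk \<omega> d k'" by (rule wnorm_le(1)[OF gf])
  qed
  have cont: "continuous_map (subtopology P W) (step_top \<omega> d k') id"
    unfolding continuous_map_def
  proof (intro conjI allI impI)
    show "id \<in> topspace (subtopology P W) \<rightarrow> topspace (step_top \<omega> d k')"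
      using Wlk topP by (auto simp: topspace_step[OF gf])
    fix U :: "('j \<Rightarrow> 'b) set" assume U: "openin (step_top \<omega> d k') U"
    show "openin (subtopology P W) {x \<in> topspace (subtopology P W). id x \<in> U}"
    proof (subst openin_subopen, intro ballI)
      fix f assume f: "f \<in> {x \<in> topspace (subtopology P W). id x \<in> U}"
      then have fW: "f \<in> W" and fU: "f \<in> U" using topP by auto
      obtain e where e: "e > 0" "{g \<in> lk \<omega> d k'. wnorm \<omega> d k' (\<lambda>\<tau>. g \<tau> - f \<tau>) < e} \<subseteq> U"
        using U fU unfolding openin_step by blast
      obtain N where N: "4 * M / e < 2 ^ N" using real_arch_pow[of 2] by auto
      define T' where "T' = PiE UNIV (\<lambda>\<tau>. if d \<tau> < N then ball (f \<tau>) (e/2) else (UNIV::'b set))"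
      have oT': "openin P T'"
        unfolding P_def T'_def openin_PiE_gen
      proof (rule disjI2, intro conjI)
        show "finite {i \<in> UNIV. (if d i < N then ball (f i) (e / 2) else UNIV) \<noteq> topspace euclidean}"
          by (rule finite_subset[OF _ finite_deg_lt[OF ft, of N]]) auto
      qed auto
      have fT': "f \<in> T'" unfolding T'_def using e by auto
      have sub: "T' \<inter> W \<subseteq> {x \<in> topspace (subtopology P W). id x \<in> U}"
      proof
        fix g assume g: "g \<in> T' \<inter> W"
        have b: "norm (g \<tau> - f \<tau>) \<le> e / 2 * \<omega> k' (d \<tau>)" for \<tau>
        proof (cases "d \<tau> < N")
          case True
          have "g \<tau> \<in> (if d \<tau> < N then ball (f \<tau>) (e/2) else UNIV)"
            using g unfolding T'_def by (auto simp: PiE_def Pi_def)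
          then have "g \<tau> \<in> ball (f \<tau>) (e/2)" using True by simp
          then have "norm (g \<tau> - f \<tau>) < e / 2" by (simp add: dist_norm norm_minus_commute)
          moreover have "e / 2 \<le> e / 2 * \<omega> k' (d \<tau>)" using gf_pos[OF gf] e by simp
          ultimately show ?thesis by simp
        next
          case False
          have "norm (g \<tau> - f \<tau>) \<le> norm (g \<tau>) + norm (f \<tau>)" by (rule norm_triangle_ineq4)
          also have "\<dots> \<le> 2 * M * \<omega> k (d \<tau>)"
          proof -
            have "norm (g \<tau>) \<le> M * \<omega> k (d \<tau>)" "norm (f \<tau>) \<le> M * \<omega> k (d \<tau>)"
              using g fW unfolding W_def by auto
            then show ?thesis by linarith
          qed
          also have "\<dots> \<le> e / 2 * \<omega> k' (d \<tau>)"
          proof -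
            have p: "(2::real) ^ N \<le> 2 ^ d \<tau>" using False by (intro power_increasing) auto
            have "4 * M < e * 2 ^ N" using N e by (simp add: field_simps)
            moreover have "e * 2 ^ N \<le> e * 2 ^ d \<tau>" using p e by (intro mult_left_mono) auto
            ultimately have "4 * M \<le> e * 2 ^ d \<tau>" by linarith
            then have "4 * M * \<omega> k (d \<tau>) \<le> e * 2 ^ d \<tau> * \<omega> k (d \<tau>)"
              by (rule mult_right_mono) simp
            also have "\<dots> = e * (2 ^ d \<tau> * \<omega> k (d \<tau>))" by (simp add: mult.assoc)
            also have "\<dots> \<le> e * \<omega> k' (d \<tau>)"
            proof -
              have "real (2 ^ d \<tau> * \<omega> k (d \<tau>)) \<le> real (\<omega> k' (d \<tau>))" using dec by (rule of_nat_mono)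
              then show ?thesis using e by (intro mult_left_mono) auto
            qed
            finally have X: "4 * M * \<omega> k (d \<tau>) \<le> e * \<omega> k' (d \<tau>)" .
            have "2 * M * \<omega> k (d \<tau>) = (4 * M * \<omega> k (d \<tau>)) / 2" by simp
            moreover have "e / 2 * \<omega> k' (d \<tau>) = (e * \<omega> k' (d \<tau>)) / 2" by simp
            ultimately show ?thesis using X by linarith
          qed
          finally show ?thesis .
        qed
        have gl: "g \<in> lk \<omega> d k'" using g Wlk by auto
        have "wnorm \<omega> d k' (\<lambda>\<tau>. g \<tau> - f \<tau>) \<le> e / 2" using wnorm_le(2)[OF gf b] .
        then have "g \<in> U" using e gl by auto
        then show "g \<in> {x \<in> topspace (subtopology P W). id x \<in> U}" using g topP by auto
      qed
      show "\<exists>T. openin (subtopology P W) T \<and> f \<in> T \<and> T \<subseteq> {x \<in> topspace (subtopology P W). id x \<in> U}"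
        using openin_subtopology_Int[OF oT'] fT' fW sub by blast
    qed
  qed
  have "compactin (subtopology P W) W" using cW by (simp add: compactin_subtopology)
  from image_compactin[OF this cont] show ?thesis unfolding W_def by simp
qed



lemma L_zero: "growth_family \<omega> \<Longrightarrow> (\<lambda>_. 0) \<in> (\<Union>k. lk \<omega> d k)"
  using wnorm_le(1)[of \<omega> "\<lambda>_. 0" 0 0 d] by auto

lemma dl_compact_bound:
  fixes d :: "'j \<Rightarrow> nat" and K :: "('j \<Rightarrow> 'b::real_normed_vector) set"
  assumes gf: "growth_family \<omega>" and K: "compactin (dl_top \<omega> d UNIV) K"
    and h: "\<And>j. \<exists>N. \<forall>n\<ge>N. j \<le> h n"
  shows "\<exists>m::real. \<forall>f\<in>K. \<forall>\<tau>. norm (f \<tau>) \<le> m * \<omega> (h (d \<tau>)) (d \<tau>)"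
proof -
  define c where "c = (\<lambda>\<tau>. real (\<omega> (h (d \<tau>)) (d \<tau>)))"
  have cpos: "c \<tau> \<ge> 1" for \<tau> unfolding c_def using gf_pos[OF gf] by simp
  have adm: "\<exists>\<delta>::real. \<delta> > 0 \<and> (\<forall>\<tau>. \<delta> * \<omega> k (d \<tau>) \<le> c \<tau>)" for k
  proof -
    obtain N where N: "\<forall>n\<ge>N. k \<le> h n" using h by blast
    define \<delta> where "\<delta> = 1 / (1 + (\<Sum>n<N. real (\<omega> k n)))"
    have sp: "(\<Sum>n<N. real (\<omega> k n)) \<ge> 0" by (simp add: sum_nonneg)
    have \<delta>: "\<delta> > 0" "\<delta> \<le> 1" unfolding \<delta>_def using sp by auto
    show ?thesis
    proof (intro exI[of _ \<delta>] conjI allI \<delta>(1))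
      fix \<tau>
      show "\<delta> * \<omega> k (d \<tau>) \<le> c \<tau>"
      proof (cases "d \<tau> < N")
        case True
        have "real (\<omega> k (d \<tau>)) \<le> (\<Sum>n<N. real (\<omega> k n))"
          using True by (intro member_le_sum) auto
        then have "\<delta> * \<omega> k (d \<tau>) \<le> \<delta> * (1 + (\<Sum>n<N. real (\<omega> k n)))"
          using \<delta> by (intro mult_left_mono) auto
        also have "\<dots> = 1" unfolding \<delta>_def using sp by simp
        finally show ?thesis using cpos[of \<tau>] by linarith
      next
        case False
        then have "\<omega> k (d \<tau>) \<le> \<omega> (h (d \<tau>)) (d \<tau>)" using N gf_mono[OF gf] by simp
        then have "real (\<omega> k (d \<tau>)) \<le> c \<tau>" unfolding c_def by simp
        moreover have "\<delta> * \<omega> k (d \<tau>) \<le> 1 * real (\<omega> k (d \<tau>))" using \<delta> by (intro mult_right_mono) auto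
        ultimately show ?thesis by simp
      qed
    qed
  qed
  define p where "p = (\<lambda>g::'j \<Rightarrow> 'b. SUP \<tau>. norm (g \<tau>) / c \<tau>)"
  have lkb: "bdd_above (range (\<lambda>\<tau>. norm (g \<tau>) / c \<tau>)) \<and> p g \<le> (1/\<delta>) * wnorm \<omega> d k g"
    if g: "g \<in> lk \<omega> d k" and \<delta>: "(\<delta>::real) > 0" "\<forall>\<tau>. \<delta> * \<omega> k (d \<tau>) \<le> c \<tau>" for g k \<delta>
  proof -
    have t: "norm (g \<tau>) / c \<tau> \<le> (1/\<delta>) * wnorm \<omega> d k g" for \<tau>
    proof -
      have cp: "c \<tau> > 0" using cpos[of \<tau>] by simp
      have w: "norm (g \<tau>) \<le> wnorm \<omega> d k g * \<omega> k (d \<tau>)" by (rule norm_le_wnorm[OF gf g])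
      have wn: "wnorm \<omega> d k g \<ge> 0" by (rule wnorm_nonneg[OF gf g])
      have "norm (g \<tau>) \<le> wnorm \<omega> d k g * (c \<tau> / \<delta>)"
      proof -
        have "real (\<omega> k (d \<tau>)) \<le> c \<tau> / \<delta>" using \<delta> by (simp add: field_simps mult.commute)
        then show ?thesis using w wn by (meson mult_left_mono order_trans)
      qed
      then show ?thesis using cp \<delta>(1) by (simp add: field_simps)
    qed
    then show ?thesis unfolding p_def bdd_above_def by (auto intro!: cSUP_least)
  qed
  have Lb: "bdd_above (range (\<lambda>\<tau>. norm (g \<tau>) / c \<tau>))" if gL: "g \<in> (\<Union>k. lk \<omega> d k)" for g :: "'j \<Rightarrow> 'b"
  proof -
    obtain k where k: "g \<in> lk \<omega> d k" using gL by auto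
    obtain \<delta> :: real where d1: "\<delta> > 0" and d2: "\<forall>\<tau>. \<delta> * \<omega> k (d \<tau>) \<le> c \<tau>" using adm by blast
    note X = lkb[OF k d1 d2]
    show ?thesis using conjunct1[OF X] by assumption
  qed
  have pup: "norm (g \<tau>) / c \<tau> \<le> p g" if "g \<in> (\<Union>k. lk \<omega> d k)" for g \<tau>
    unfolding p_def by (rule cSUP_upper[OF UNIV_I Lb[OF that]])
  have comb: "p (\<lambda>\<tau>. a *\<^sub>R f \<tau> + b *\<^sub>R g \<tau>) \<le> \<bar>a\<bar> * p f + \<bar>b\<bar> * p g"
    if f: "f \<in> (\<Union>k. lk \<omega> d k)" and g: "g \<in> (\<Union>k. lk \<omega> d k)" for f g a b
  proof -
    have "(SUP \<tau>. norm (a *\<^sub>R f \<tau> + b *\<^sub>R g \<tau>) / c \<tau>) \<le> \<bar>a\<bar> * p f + \<bar>b\<bar> * p g"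
    proof (rule cSUP_least)
      fix \<tau>
      have cp: "c \<tau> > 0" using cpos[of \<tau>] by simp
      have "norm (a *\<^sub>R f \<tau> + b *\<^sub>R g \<tau>) \<le> \<bar>a\<bar> * norm (f \<tau>) + \<bar>b\<bar> * norm (g \<tau>)"
        using norm_triangle_ineq[of "a *\<^sub>R f \<tau>" "b *\<^sub>R g \<tau>"] by simp
      then have "norm (a *\<^sub>R f \<tau> + b *\<^sub>R g \<tau>) / c \<tau> \<le> (\<bar>a\<bar> * norm (f \<tau>) + \<bar>b\<bar> * norm (g \<tau>)) / c \<tau>"
        using cp by (intro divide_right_mono) auto
      also have "\<dots> = \<bar>a\<bar> * (norm (f \<tau>) / c \<tau>) + \<bar>b\<bar> * (norm (g \<tau>) / c \<tau>)"
        by (simp add: add_divide_distrib)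
      also have "\<dots> \<le> \<bar>a\<bar> * p f + \<bar>b\<bar> * p g"
        by (intro add_mono mult_left_mono pup f g) auto
      finally show "norm (a *\<^sub>R f \<tau> + b *\<^sub>R g \<tau>) / c \<tau> \<le> \<bar>a\<bar> * p f + \<bar>b\<bar> * p g" .
    qed auto
    then show ?thesis unfolding p_def by simp
  qed
  have bnd: "\<exists>C>0. \<forall>g\<in>lk \<omega> d k. p g \<le> C * wnorm \<omega> d k g" for k
  proof -
    obtain \<delta> :: real where d1: "\<delta> > 0" and d2: "\<forall>\<tau>. \<delta> * \<omega> k (d \<tau>) \<le> c \<tau>" using adm by blast
    show ?thesis using lkb[OF _ d1 d2] d1 by (intro exI[of _ "1/\<delta>"]) auto
  qed
  define U where "U = (\<lambda>m::nat. {g \<in> (\<Union>k. lk \<omega> d k). p (\<lambda>\<tau>. g \<tau> - 0) < real m})"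
  have oU: "openin (dl_top \<omega> d UNIV) (U m)" for m
    unfolding U_def using dl_open_ball[OF gf comb bnd L_zero[OF gf]] by simp
  have KL: "K \<subseteq> (\<Union>k. lk \<omega> d k)"
    using compactin_subset_topspace[OF K] by (simp add: topspace_dl[OF gf])
  have cov: "K \<subseteq> \<Union>(range U)"
  proof
    fix f assume "f \<in> K"
    then have "f \<in> (\<Union>k. lk \<omega> d k)" using KL by auto
    moreover obtain m :: nat where "p f < m" using reals_Archimedean2 by blast
    ultimately show "f \<in> \<Union>(range U)" unfolding U_def by auto
  qed
  obtain F where F: "finite F" "F \<subseteq> range U" "K \<subseteq> \<Union>F"
    using K oU cov unfolding compactin_def by (metis rangeE)
  obtain M0 where M0: "M0 \<subseteq> UNIV" "finite M0" "F = U ` M0"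
    using F finite_subset_image by metis
  obtain m0 where m0: "\<forall>i\<in>M0. i \<le> m0" using M0(2) finite_nat_set_iff_bounded_le by blast
  have "K \<subseteq> U m0"
  proof
    fix f assume "f \<in> K"
    then obtain i where "i \<in> M0" "f \<in> U i" using F(3) M0(3) by auto
    then show "f \<in> U m0" using m0 unfolding U_def by force
  qed
  show ?thesis
  proof (intro exI[of _ "real m0"] ballI allI)
    fix f \<tau> assume "f \<in> K"
    then have fL: "f \<in> (\<Union>k. lk \<omega> d k)" and pf: "p f < m0" using \<open>K \<subseteq> U m0\<close> unfolding U_def by auto
    have "norm (f \<tau>) / c \<tau> < m0" using pup[OF fL, of \<tau>] pf by linarith
    then show "norm (f \<tau>) \<le> real m0 * \<omega> (h (d \<tau>)) (d \<tau>)"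
      using cpos[of \<tau>] unfolding c_def by (simp add: field_simps)
  qed
qed



theorem lemmaB5:
  fixes \<omega> :: "nat \<Rightarrow> nat \<Rightarrow> nat" and d :: "'j \<Rightarrow> nat"
  assumes "growth_family \<omega>"
    and "finite_type_grading d"
    and "\<exists>S::'b::banach set. finite S \<and> span S = UNIV"
  shows "(\<exists>\<kappa>::nat \<Rightarrow> nat. strict_mono \<kappa> \<and>
            (\<forall>n. (lk \<omega> d (\<kappa> n) :: ('j \<Rightarrow> 'b) set) \<subseteq> lk \<omega> d (\<kappa> (Suc n)) \<and>
                 (\<exists>C :: ('j \<Rightarrow> 'b) set. compactin (step_top \<omega> d (\<kappa> (Suc n))) C \<and>
                      {f \<in> lk \<omega> d (\<kappa> n). wnorm \<omega> d (\<kappa> n) f \<le> 1} \<subseteq> C)) \<and>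
            dl_top \<omega> d (range \<kappa>) = (dl_top \<omega> d UNIV :: ('j \<Rightarrow> 'b) topology))
       \<and> (\<forall>K :: ('j \<Rightarrow> 'b) set. compactin (dl_top \<omega> d UNIV) K \<longrightarrow>
            (\<exists>k. K \<subseteq> lk \<omega> d k \<and> compactin (step_top \<omega> d k) K))"
proof -
  note gf = assms(1) and ft = assms(2)
  obtain S :: "'b set" where fS: "finite S" "span S = UNIV" using assms(3) by blast
  have "\<forall>k1. \<exists>k2. \<forall>n. 2 ^ n * \<omega> k1 n \<le> \<omega> k2 n"
    using gf unfolding growth_family_def by metis
  then obtain g where g: "\<And>k1 n. 2 ^ n * \<omega> k1 n \<le> \<omega> (g k1) n" by metis
  define \<kappa> where "\<kappa> = rec_nat 0 (\<lambda>_ k. Suc (max k (g k)))"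
  have \<kappa>S: "\<kappa> (Suc n) = Suc (max (\<kappa> n) (g (\<kappa> n)))" for n by (simp add: \<kappa>_def)
  have sm: "strict_mono \<kappa>" unfolding strict_mono_Suc_iff
  proof
    fix n show "\<kappa> n < \<kappa> (Suc n)" unfolding \<kappa>S by simp
  qed
  have dec: "2 ^ m * \<omega> (\<kappa> n) m \<le> \<omega> (\<kappa> (Suc n)) m" for n m
  proof -
    have "g (\<kappa> n) \<le> \<kappa> (Suc n)" using \<kappa>S by simp
    then have "\<omega> (g (\<kappa> n)) m \<le> \<omega> (\<kappa> (Suc n)) m" by (rule gf_mono[OF gf])
    moreover have "2 ^ m * \<omega> (\<kappa> n) m \<le> \<omega> (g (\<kappa> n)) m" using g by blast
    ultimately show ?thesis by linarith
  qed
  have kle: "k \<le> \<kappa> k" for k using seq_suble[OF sm] .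
  have part1: "strict_mono \<kappa> \<and>
            (\<forall>n. (lk \<omega> d (\<kappa> n) :: ('j \<Rightarrow> 'b) set) \<subseteq> lk \<omega> d (\<kappa> (Suc n)) \<and>
                 (\<exists>C :: ('j \<Rightarrow> 'b) set. compactin (step_top \<omega> d (\<kappa> (Suc n))) C \<and>
                      {f \<in> lk \<omega> d (\<kappa> n). wnorm \<omega> d (\<kappa> n) f \<le> 1} \<subseteq> C)) \<and>
            dl_top \<omega> d (range \<kappa>) = (dl_top \<omega> d UNIV :: ('j \<Rightarrow> 'b) topology)"
  proof (intro conjI allI sm)
    fix n
    have le: "\<kappa> n \<le> \<kappa> (Suc n)" using sm by (simp add: strict_mono_less_eq)
    show "(lk \<omega> d (\<kappa> n) :: ('j \<Rightarrow> 'b) set) \<subseteq> lk \<omega> d (\<kappa> (Suc n))"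
      using lk_mono(1)[OF gf le] by blast
    let ?C = "{f::'j \<Rightarrow> 'b. \<forall>\<tau>. norm (f \<tau>) \<le> (1::real) * real (\<omega> (\<kappa> n) (d \<tau>))}"
    have "compactin (step_top \<omega> d (\<kappa> (Suc n))) ?C"
      by (rule ball_compact[OF gf ft fS dec]) simp
    moreover have "{f \<in> lk \<omega> d (\<kappa> n). wnorm \<omega> d (\<kappa> n) f \<le> 1} \<subseteq> ?C"
    proof (safe)
      fix f :: "'j \<Rightarrow> 'b" and \<tau> assume f: "f \<in> lk \<omega> d (\<kappa> n)" "wnorm \<omega> d (\<kappa> n) f \<le> 1"
      have "norm (f \<tau>) \<le> wnorm \<omega> d (\<kappa> n) f * \<omega> (\<kappa> n) (d \<tau>)" by (rule norm_le_wnorm[OF gf f(1)])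
      also have "\<dots> \<le> (1::real) * real (\<omega> (\<kappa> n) (d \<tau>))" using f(2) by (intro mult_right_mono) auto
      finally show "norm (f \<tau>) \<le> 1 * real (\<omega> (\<kappa> n) (d \<tau>))" .
    qed
    ultimately show "\<exists>C :: ('j \<Rightarrow> 'b) set. compactin (step_top \<omega> d (\<kappa> (Suc n))) C \<and>
                      {f \<in> lk \<omega> d (\<kappa> n). wnorm \<omega> d (\<kappa> n) f \<le> 1} \<subseteq> C" by blast
  next
    have Ueq: "(\<Union>k\<in>range \<kappa>. lk \<omega> d k) = (\<Union>k\<in>UNIV. lk \<omega> d k :: ('j \<Rightarrow> 'b) set)"
    proof
      show "(\<Union>k\<in>range \<kappa>. lk \<omega> d k) \<subseteq> (\<Union>k\<in>UNIV. lk \<omega> d k :: ('j \<Rightarrow> 'b) set)" by blast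
      show "(\<Union>k\<in>UNIV. lk \<omega> d k :: ('j \<Rightarrow> 'b) set) \<subseteq> (\<Union>k\<in>range \<kappa>. lk \<omega> d k)"
      proof
        fix f :: "'j \<Rightarrow> 'b" assume "f \<in> (\<Union>k\<in>UNIV. lk \<omega> d k)"
        then obtain k where "f \<in> lk \<omega> d k" by blast
        then have "f \<in> lk \<omega> d (\<kappa> k)" by (rule lk_mono(1)[OF gf kle])
        then show "f \<in> (\<Union>k\<in>range \<kappa>. lk \<omega> d k)" by blast
      qed
    qed
    have tr: "(\<forall>k\<in>range \<kappa>. \<exists>e>0. {g \<in> lk \<omega> d k. wnorm \<omega> d k g < e} \<subseteq> V) =
              (\<forall>k\<in>UNIV. \<exists>e>0. {g \<in> lk \<omega> d k. wnorm \<omega> d k g < e} \<subseteq> V)"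
      for V :: "('j \<Rightarrow> 'b) set"
    proof
      assume H: "\<forall>k\<in>range \<kappa>. \<exists>e>0. {g \<in> lk \<omega> d k. wnorm \<omega> d k g < e} \<subseteq> V"
      show "\<forall>k\<in>UNIV. \<exists>e>0. {g \<in> lk \<omega> d k. wnorm \<omega> d k g < e} \<subseteq> V"
      proof
        fix k :: nat
        have "\<exists>e>0. {g \<in> lk \<omega> d (\<kappa> k). wnorm \<omega> d (\<kappa> k) g < e} \<subseteq> V"
          by (rule bspec[OF H rangeI])
        then obtain e where e: "e > 0" "{g \<in> lk \<omega> d (\<kappa> k). wnorm \<omega> d (\<kappa> k) g < e} \<subseteq> V"
          by blast
        have "{g \<in> lk \<omega> d k. wnorm \<omega> d k g < e} \<subseteq> V"
        proof
          fix h :: "'j \<Rightarrow> 'b" assume "h \<in> {g \<in> lk \<omega> d k. wnorm \<omega> d k g < e}"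
          then have h: "h \<in> lk \<omega> d k" "wnorm \<omega> d k h < e" by auto
          have "h \<in> lk \<omega> d (\<kappa> k)" by (rule lk_mono(1)[OF gf kle h(1)])
          moreover have "wnorm \<omega> d (\<kappa> k) h < e"
            using lk_mono(2)[OF gf kle h(1)] h(2) by linarith
          ultimately show "h \<in> V" using e(2) by blast
        qed
        then show "\<exists>e>0. {g \<in> lk \<omega> d k. wnorm \<omega> d k g < e} \<subseteq> V" using e(1) by blast
      qed
    qed blast
    show "dl_top \<omega> d (range \<kappa>) = (dl_top \<omega> d UNIV :: ('j \<Rightarrow> 'b) topology)"
      unfolding dl_top_def by (simp only: Ueq tr)
  qed
  have part2: "\<forall>K :: ('j \<Rightarrow> 'b) set. compactin (dl_top \<omega> d UNIV) K \<longrightarrow>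
            (\<exists>k. K \<subseteq> lk \<omega> d k \<and> compactin (step_top \<omega> d k) K)"
  proof (intro allI impI)
    fix K :: "('j \<Rightarrow> 'b) set" assume K: "compactin (dl_top \<omega> d UNIV) K"
    have bdd: "\<exists>k (M::real). \<forall>f\<in>K. \<forall>\<tau>. norm (f \<tau>) \<le> M * real (\<omega> k (d \<tau>))"
    proof (rule ccontr)
      assume nb: "\<not> (\<exists>k (M::real). \<forall>f\<in>K. \<forall>\<tau>. norm (f \<tau>) \<le> M * real (\<omega> k (d \<tau>)))"
      have idN: "\<And>j. \<exists>N. \<forall>n\<ge>N. j \<le> (\<lambda>n. n) n" by auto
      obtain m1 :: real where m1: "\<forall>f\<in>K. \<forall>\<tau>. norm (f \<tau>) \<le> m1 * real (\<omega> ((\<lambda>n. n) (d \<tau>)) (d \<tau>))"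
        using dl_compact_bound[OF gf K idN] by blast
      have Q: "\<exists>f\<in>K. \<exists>\<tau>. N < d \<tau> \<and> real k * \<omega> k (d \<tau>) < norm (f \<tau>)" for k N :: nat
      proof -
        define M where "M = real k + \<bar>m1\<bar> * (\<Sum>n\<le>N. real (\<omega> n n))"
        have sp: "(\<Sum>n\<le>N. real (\<omega> n n)) \<ge> 0" by (simp add: sum_nonneg)
        have Mk: "real k \<le> M" unfolding M_def using sp by simp
        obtain f \<tau> where f: "f \<in> K" and fb: "\<not> norm (f \<tau>) \<le> M * \<omega> k (d \<tau>)" using nb by blast
        have w1: "real (\<omega> k (d \<tau>)) \<ge> 1" by (rule gf_pos[OF gf])
        have "N < d \<tau>"
        proof (rule ccontr)
          assume "\<not> N < d \<tau>"
          then have dN: "d \<tau> \<le> N" by simp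
          have "norm (f \<tau>) \<le> m1 * \<omega> (d \<tau>) (d \<tau>)" using m1 f by auto
          also have "\<dots> \<le> \<bar>m1\<bar> * \<omega> (d \<tau>) (d \<tau>)" by (intro mult_right_mono) auto
          also have "\<dots> \<le> \<bar>m1\<bar> * (\<Sum>n\<le>N. real (\<omega> n n))"
            using dN by (intro mult_left_mono member_le_sum[of "d \<tau>" "{..N}" "\<lambda>n. real (\<omega> n n)"]) auto
          also have "\<dots> \<le> M" unfolding M_def by simp
          also have "\<dots> \<le> M * \<omega> k (d \<tau>)"
          proof -
            have "M \<ge> 0" using Mk by simp
            then have "M * 1 \<le> M * \<omega> k (d \<tau>)" using w1 by (intro mult_left_mono) auto
            then show ?thesis by simp
          qed
          finally show False using fb by simp
        qed
        moreover have "real k * \<omega> k (d \<tau>) < norm (f \<tau>)"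
        proof -
          have "real k * \<omega> k (d \<tau>) \<le> M * \<omega> k (d \<tau>)" using Mk by (intro mult_right_mono) auto
          then show ?thesis using fb by simp
        qed
        ultimately show ?thesis using f by blast
      qed
      define P where "P = (\<lambda>k (x :: ('j \<Rightarrow> 'b) \<times> 'j). fst x \<in> K \<and> real k * \<omega> k (d (snd x)) < norm (fst x (snd x)))"
      have "\<exists>xs. \<forall>n. P n (xs n) \<and> d (snd (xs n)) < d (snd (xs (Suc n)))"
      proof (rule dependent_nat_choice)
        show "\<exists>x. P 0 x" using Q[of 0 0] unfolding P_def by auto
        fix x n assume "P n x"
        obtain f \<tau> where "f \<in> K" "d (snd x) < d \<tau>" "real (Suc n) * \<omega> (Suc n) (d \<tau>) < norm (f \<tau>)"
          using Q[of "d (snd x)" "Suc n"] by blast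
        then show "\<exists>y. P (Suc n) y \<and> d (snd x) < d (snd y)"
          unfolding P_def by (intro exI[of _ "(f, \<tau>)"]) auto
      qed
      then obtain xs where xs: "\<And>n. P n (xs n)" "\<And>n. d (snd (xs n)) < d (snd (xs (Suc n)))" by blast
      define nn where "nn = (\<lambda>k. d (snd (xs k)))"
      have smn: "strict_mono nn" unfolding strict_mono_Suc_iff nn_def using xs(2) by blast
      define h where "h = (\<lambda>n. LEAST k. n \<le> nn k)"
      have hex: "n \<le> nn (h n)" for n
        unfolding h_def by (rule LeastI[of _ n]) (rule seq_suble[OF smn])
      have hN: "\<exists>N. \<forall>n\<ge>N. j \<le> h n" for j
      proof (intro exI[of _ "Suc (nn j)"] allI impI)
        fix n assume n: "Suc (nn j) \<le> n"
        show "j \<le> h n"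
        proof (rule ccontr)
          assume "\<not> j \<le> h n"
          then have "h n < j" by simp
          then have "nn (h n) < nn j" using smn by (simp add: strict_mono_less)
          then show False using hex[of n] n by linarith
        qed
      qed
      have hnn: "h (nn k) = k" for k
        unfolding h_def
      proof (rule Least_equality)
        show "nn k \<le> nn k" by simp
        fix y assume "nn k \<le> nn y"
        then show "k \<le> y" using smn by (simp add: strict_mono_less_eq)
      qed
      obtain m :: real where m: "\<forall>f\<in>K. \<forall>\<tau>. norm (f \<tau>) \<le> m * real (\<omega> (h (d \<tau>)) (d \<tau>))"
        using dl_compact_bound[OF gf K hN] by blast
      obtain k :: nat where mk: "m \<le> real k" using real_arch_simple by blast
      have Pk: "fst (xs k) \<in> K" "real k * \<omega> k (d (snd (xs k))) < norm (fst (xs k) (snd (xs k)))"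
        using xs(1)[of k] unfolding P_def by auto
      have "h (d (snd (xs k))) = k" using hnn[of k] unfolding nn_def .
      then have "norm (fst (xs k) (snd (xs k))) \<le> m * \<omega> k (d (snd (xs k)))"
        using m Pk(1) by metis
      also have "\<dots> \<le> real k * \<omega> k (d (snd (xs k)))" using mk by (intro mult_right_mono) auto
      finally show False using Pk(2) by simp
    qed
    then obtain k0 and M0 :: real where KB: "\<forall>f\<in>K. \<forall>\<tau>. norm (f \<tau>) \<le> M0 * real (\<omega> k0 (d \<tau>))" by blast
    define M where "M = max M0 0"
    define W where "W = {f::'j \<Rightarrow> 'b. \<forall>\<tau>. norm (f \<tau>) \<le> M * \<omega> (\<kappa> k0) (d \<tau>)}"
    have KW: "K \<subseteq> W"
    proof
      fix f assume f: "f \<in> K"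
      have "norm (f \<tau>) \<le> M * \<omega> (\<kappa> k0) (d \<tau>)" for \<tau>
      proof -
        have "norm (f \<tau>) \<le> M0 * \<omega> k0 (d \<tau>)" using KB f by blast
        also have "\<dots> \<le> M * \<omega> k0 (d \<tau>)" unfolding M_def by (intro mult_right_mono) auto
        also have "\<dots> \<le> M * \<omega> (\<kappa> k0) (d \<tau>)"
          using gf_mono[OF gf kle, of k0 "d \<tau>"] unfolding M_def by (intro mult_left_mono) auto
        finally show ?thesis .
      qed
      then show "f \<in> W" unfolding W_def by blast
    qed
    let ?k = "\<kappa> (Suc k0)"
    have cW: "compactin (step_top \<omega> d ?k) W"
      unfolding W_def by (rule ball_compact[OF gf ft fS dec]) (simp add: M_def)
    have Wlk: "W \<subseteq> lk \<omega> d ?k"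
      using compactin_subset_topspace[OF cW] by (simp add: topspace_step[OF gf])
    have Kc: "closedin (dl_top \<omega> d UNIV) K"
      by (rule compactin_imp_closedin[OF hausdorff_dl[OF gf] K])
    then have oc: "openin (dl_top \<omega> d UNIV) ((\<Union>k. lk \<omega> d k) - K)"
      unfolding closedin_def by (simp add: topspace_dl[OF gf])
    have "closedin (step_top \<omega> d ?k) K"
      unfolding closedin_def
    proof
      show "K \<subseteq> topspace (step_top \<omega> d ?k)" using KW Wlk by (simp add: topspace_step[OF gf])
      show "openin (step_top \<omega> d ?k) (topspace (step_top \<omega> d ?k) - K)"
        unfolding openin_step topspace_step[OF gf]
      proof (intro conjI ballI)
        show "lk \<omega> d ?k - K \<subseteq> lk \<omega> d ?k" by blast
        fix f assume f: "f \<in> lk \<omega> d ?k - K"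
        then have fL: "f \<in> ((\<Union>k. lk \<omega> d k) - K)" by blast
        obtain V where V: "abs_convex V" "V \<subseteq> (\<Union>k. lk \<omega> d k)"
            "\<forall>k. \<exists>e>0. {g \<in> lk \<omega> d k. wnorm \<omega> d k g < e} \<subseteq> V"
            "\<forall>v\<in>V. (\<lambda>\<tau>. f \<tau> + v \<tau>) \<in> ((\<Union>k. lk \<omega> d k) - K)"
          using dlP_E[OF oc[unfolded openin_dl] fL] by blast
        obtain e where e: "e > 0" "{g \<in> lk \<omega> d ?k. wnorm \<omega> d ?k g < e} \<subseteq> V" using V(3) by blast
        show "\<exists>e>0. {g \<in> lk \<omega> d ?k. wnorm \<omega> d ?k (\<lambda>\<tau>. g \<tau> - f \<tau>) < e} \<subseteq> lk \<omega> d ?k - K"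
        proof (intro exI[of _ e] conjI subsetI)
          show "e > 0" by (rule e(1))
          fix g assume g: "g \<in> {g \<in> lk \<omega> d ?k. wnorm \<omega> d ?k (\<lambda>\<tau>. g \<tau> - f \<tau>) < e}"
          have gf': "g \<in> lk \<omega> d ?k" using g by blast
          have fk: "f \<in> lk \<omega> d ?k" using f by simp
          have gfd: "(\<lambda>\<tau>. g \<tau> - f \<tau>) \<in> lk \<omega> d ?k" by (rule lk_diff[OF gf gf' fk])
          have w: "wnorm \<omega> d ?k (\<lambda>\<tau>. g \<tau> - f \<tau>) < e" using g by simp
          have "(\<lambda>\<tau>. g \<tau> - f \<tau>) \<in> V" by (rule subsetD[OF e(2)]) (simp add: gfd w)
          then have "(\<lambda>\<tau>. f \<tau> + (g \<tau> - f \<tau>)) \<in> ((\<Union>k. lk \<omega> d k) - K)" by (rule bspec[OF V(4)])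
          moreover have "(\<lambda>\<tau>. f \<tau> + (g \<tau> - f \<tau>)) = g" by simp
          ultimately have "g \<notin> K" by simp
          then show "g \<in> lk \<omega> d ?k - K" using gf' by blast
        qed
      qed
    qed
    then have "compactin (step_top \<omega> d ?k) K" by (rule closed_compactin[OF cW KW])
    then show "\<exists>k. K \<subseteq> lk \<omega> d k \<and> compactin (step_top \<omega> d k) K"
      using KW Wlk by blast
  qed
  show ?thesis using part1 part2 by blast
qed


end
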